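(* Let $m \in \mathbb{N}$, $k \geq 4$ and $|q - q_k| < q_k^{-(m+2)k-3}$. Writing $L(X) = \min X$ and $R(X) = \max X$ for compact $X\subset\mathbb{R}$: (a) If $q < q_k$ then $L(Q_m(q)) < L(P_0(q)) < \cdots < L(P_m(q)) < R(Q_m(q)) < R(P_0(q)) < \cdots < R(P_m(q))$. (b) If $q = q_k$ then $L(Q_m(q)) < L(P_0(q)) = \cdots = L(P_m(q)) < R(Q_m(q)) < R(P_0(q)) = \cdots = R(P_m(q))$. (c) If $q > q_k$ then $L(Q_m(q)) < L(P_m(q)) < \cdots < L(P_0(q)) < R(Q_m(q)) < R(P_m(q)) < \cdots < R(P_0(q))$.
   Context: $q_j$ ($j\ge2$) is the unique root in $(1,2)$ of $x^j - x^{j-1} - \cdots - x - 1 = 0$. $\pi_q((\epsilon_j)_{j\ge1}) = \sum_{j\ge1}\epsilon_j q^{-j}$. Words are concatenated; $a^n$ is $n$ repetitions, $w^\infty$ infinite repetition. $S_{k-1}$ is the set of $(\epsilon_j) \in \{0,1\}^\mathbb{N}$ containing no block of consecutive entries equal to $01^{k-1}$ or $10^{k-1}$. $g_{q,k}(x) = q^{-k}x + \sum_{j=1}^{k-1}q^{-j}$, with $g_{q,k}^i$ its $i$-fold composition. Define $P_i(q) = g_{q,k}^i(\pi_q(S_{k-1})+1) \cap \big[g_{q,k}^i(1),\ g_{q,k}^i\big(1 + q^{-(m-i)k}\pi_q(0^{k-3}(01^{k-1})^\infty)\big)\big]$ for $0\le i\le m$, and $Q_m(q) = g_{q,k}^m(\pi_q(S_{k-1}))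 \cap \big[g_{q,k}^m(\pi_q(1^{k-3}(10^{k-1})^\infty)),\ g_{q,k}^m(\pi_q(1^\infty))\big]$. *)

theory Defs
  imports Complex_Main
begin

definition qk :: "nat \<Rightarrow> real" where
  "qk j = (THE x. 1 < x \<and> x < 2 \<and> x ^ j - (\<Sum>i<j. x ^ i) = 0)"

text \<open>Binary sequences (\<epsilon>_1, \<epsilon>_2, ...) are represented as nat \<Rightarrow> bool,
  with index 0 holding \<epsilon>_1.\<close>
definition pi_q :: "real \<Rightarrow> (nat \<Rightarrow> bool) \<Rightarrow> real" where
  "pi_q q e = (\<Sum>j. (if e j then 1 else 0) * (1 / q) ^ (Suc j))"

definition pre_per :: "bool list \<Rightarrow> bool list \<Rightarrow> nat \<Rightarrow> bool" where
  "pre_per u w j = (if j < length u then u ! j else w ! ((j - length u) mod length w))"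

text \<open>S_{k-1}: sequences containing no block 0 1^{k-1} nor 1 0^{k-1}.\<close>
definition S_set :: "nat \<Rightarrow> (nat \<Rightarrow> bool) set" where
  "S_set k = {e. \<forall>n. \<not> (\<not> e n \<and> (\<forall>i\<in>{1..k-1}. e (n + i)))
                   \<and> \<not> (e n \<and> (\<forall>i\<in>{1..k-1}. \<not> e (n + i)))}"

definition g_qk :: "real \<Rightarrow> nat \<Rightarrow> real \<Rightarrow> real" where
  "g_qk q k x = x / q ^ k + (\<Sum>j\<in>{1..k-1}. 1 / q ^ j)"

definition P_set :: "nat \<Rightarrow> nat \<Rightarrow> nat \<Rightarrow> real \<Rightarrow> real set" where
  "P_set m k i q =
     (g_qk q k ^^ i) ` ((\<lambda>e. pi_q q e + 1) ` S_set k) \<inter>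
     {(g_qk q k ^^ i) 1 ..
      (g_qk q k ^^ i) (1 + (1 / q) ^ ((m - i) * k) *
          pi_q q (pre_per (replicate (k - 3) False) (False # replicate (k - 1) True)))}"

definition Q_set :: "nat \<Rightarrow> nat \<Rightarrow> real \<Rightarrow> real set" where
  "Q_set m k q =
     (g_qk q k ^^ m) ` (pi_q q ` S_set k) \<inter>
     {(g_qk q k ^^ m) (pi_q q (pre_per (replicate (k - 3) True) (True # replicate (k - 1) False))) ..
      (g_qk q k ^^ m) (pi_q q (pre_per [] [True]))}"

definition Lm :: "real set \<Rightarrow> real" where "Lm X = (LEAST x. x \<in> X)"
definition Rm :: "real set \<Rightarrow> real" where "Rm X = (GREATEST x. x \<in> X)"

end

theory Submission
  imports Defs "HOL-Analysis.Analysis"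
begin

lemma open_coord_true: "open {e::nat\<Rightarrow>bool. e j}"
proof -
  have "open ((\<lambda>e::nat\<Rightarrow>bool. e j) -` {True} \<inter> UNIV)"
    using continuous_on_open_vimage[of UNIV "\<lambda>e::nat\<Rightarrow>bool. e j"] continuous_on_product_coordinates
    by (simp add: open_discrete)
  moreover have "(\<lambda>e::nat\<Rightarrow>bool. e j) -` {True} \<inter> UNIV = {e. e j}" by auto
  ultimately show ?thesis by simp
qed

lemma open_coord_false: "open {e::nat\<Rightarrow>bool. \<not> e j}"
proof -
  have "open ((\<lambda>e::nat\<Rightarrow>bool. e j) -` {False} \<inter> UNIV)"
    using continuous_on_open_vimage[of UNIV "\<lambda>e::nat\<Rightarrow>bool. e j"] continuous_on_product_coordinates
    by (simp add: open_discrete)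
  moreover have "(\<lambda>e::nat\<Rightarrow>bool. e j) -` {False} \<inter> UNIV = {e. \<not> e j}" by auto
  ultimately show ?thesis by simp
qed

lemma closed_S: "closed (S_set k)"
proof -
  have eq: "S_set k = (\<Inter>n. - ({e. \<not> e n} \<inter> (\<Inter>i\<in>{1..k-1}. {e. e (n+i)}))
                         \<inter> - ({e. e n} \<inter> (\<Inter>i\<in>{1..k-1}. {e. \<not> e (n+i)})))"
    unfolding S_set_def by auto
  show ?thesis unfolding eq
    by (intro closed_INT ballI closed_Int closed_Compl open_Int open_INT finite_atLeastAtMost
        open_coord_true open_coord_false)
qed

lemma compact_UNIV_bool_seq: "compact (UNIV :: (nat \<Rightarrow> bool) set)"
proof -
  have "compactin (product_topology (\<lambda>_. euclidean) UNIV) (PiE UNIV (\<lambda>_::nat. UNIV::bool set))"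
    using compactin_PiE[of "\<lambda>_. euclidean" UNIV "\<lambda>_::nat. UNIV::bool set"]
    by (simp add: finite_imp_compact)
  moreover have "PiE UNIV (\<lambda>_::nat. UNIV::bool set) = UNIV" by auto
  ultimately show ?thesis by (simp add: euclidean_product_topology)
qed

lemma cont_term: "continuous_on UNIV (\<lambda>e::nat\<Rightarrow>bool. (if e j then 1 else 0) * (c::real))"
proof -
  have "continuous_on UNIV ((\<lambda>b. (if b then 1 else 0) * c) \<circ> (\<lambda>e::nat\<Rightarrow>bool. e j))"
  proof (rule continuous_on_compose)
    show "continuous_on UNIV (\<lambda>e::nat\<Rightarrow>bool. e j)" by simp
    show "continuous_on ((\<lambda>e::nat\<Rightarrow>bool. e j) ` UNIV) (\<lambda>b. (if b then 1 else 0) * c)"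
      by (simp add: continuous_on_open_vimage open_discrete)
  qed
  then show ?thesis by (simp add: o_def)
qed

lemma pi_summable: assumes "(q::real) > 1" shows "summable (\<lambda>j. (if e j then 1 else 0) * (1/q) ^ Suc j)"
proof -
  have g: "summable (\<lambda>j. (1/q) ^ Suc j)" unfolding power_Suc
    by (rule summable_mult, rule summable_geometric) (use assms in simp)
  have "norm ((if e j then 1 else 0) * (1/q) ^ Suc j) \<le> (1/q) ^ Suc j" for j using assms by simp
  then show ?thesis by (intro summable_comparison_test'[OF g, of 0])
qed

lemma cont_pi: assumes "q > 1" shows "continuous_on UNIV (pi_q q)"
proof -
  have ul: "uniform_limit UNIV (\<lambda>n e. \<Sum>j<n. (if e j then 1 else 0) * (1/q) ^ Suc j)
        (\<lambda>e. suminf (\<lambda>j. (if e j then 1 else 0) * (1/q) ^ Suc j)) sequentially"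
    apply (rule Weierstrass_m_test[where M = "\<lambda>j. (1/q) ^ Suc j"])
    using assms by (auto intro!: summable_mult summable_geometric)
  show ?thesis unfolding pi_q_def fun_eq_iff
    apply (rule uniform_limit_theorem[OF _ ul])
     apply (intro always_eventually allI continuous_on_sum cont_term)
    by simp
qed

lemma compact_piS: assumes "q > 1" shows "compact (pi_q q ` S_set k)"
  by (rule compact_continuous_image[OF continuous_on_subset[OF cont_pi[OF assms]]])
     (auto intro: closed_Int_compact[OF closed_S compact_UNIV_bool_seq, simplified])

abbreviation bv :: "bool \<Rightarrow> real" where "bv b \<equiv> (if b then 1 else 0)"

lemma pi_shift: assumes "(q::real) > 1"
  shows "pi_q q e = (\<Sum>j<n. bv (e j) * (1/q) ^ Suc j) + (1/q) ^ n * pi_q q (\<lambda>j. e (j + n))"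
proof -
  have s: "summable (\<lambda>j. bv (e j) * (1/q) ^ Suc j)" by (rule pi_summable[OF assms])
  have s2: "summable (\<lambda>j. bv (e (j+n)) * (1/q) ^ Suc j)" by (rule pi_summable[OF assms])
  have "pi_q q e = (\<Sum>j. bv (e (j+n)) * (1/q) ^ Suc (j+n)) + (\<Sum>j<n. bv (e j) * (1/q) ^ Suc j)"
    unfolding pi_q_def by (rule suminf_split_initial_segment[OF s])
  also have "(\<Sum>j. bv (e (j+n)) * (1/q) ^ Suc (j+n)) = (\<Sum>j. (1/q)^n * (bv (e (j+n)) * (1/q) ^ Suc j))"
    by (simp add: power_add mult_ac)
  also have "\<dots> = (1/q)^n * pi_q q (\<lambda>j. e (j + n))"
    unfolding pi_q_def by (rule suminf_mult[OF s2])
  finally show ?thesis by simp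
qed

lemma pi_nonneg: assumes "(q::real) > 1" shows "0 \<le> pi_q q e"
  unfolding pi_q_def using assms by (intro suminf_nonneg pi_summable) auto

lemma pi_mono: assumes "(q::real) > 1" "\<And>j. e j \<Longrightarrow> e' j" shows "pi_q q e \<le> pi_q q e'"
  unfolding pi_q_def using assms by (intro suminf_le pi_summable) auto

lemma pi_ge_sum: assumes "(q::real) > 1" "\<And>j. j < n \<Longrightarrow> e j"
  shows "(\<Sum>j<n. (1/q) ^ Suc j) \<le> pi_q q e"
proof -
  have "(\<Sum>j<n. (1/q) ^ Suc j) = (\<Sum>j<n. bv (e j) * (1/q) ^ Suc j)"
    using assms(2) by (intro sum.cong) auto
  also have "\<dots> \<le> pi_q q e" unfolding pi_q_def
    using assms(1) by (intro sum_le_suminf pi_summable) auto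
  finally show ?thesis .
qed

lemma pi_ge_one: assumes "(q::real) > 1" "e i" shows "(1/q) ^ Suc i \<le> pi_q q e"
proof -
  have "(\<Sum>j\<in>{i}. bv (e j) * (1/q) ^ Suc j) \<le> pi_q q e" unfolding pi_q_def
    using assms(1) by (intro sum_le_suminf pi_summable) auto
  then show ?thesis using assms by simp
qed

lemma pi_ones: assumes "(q::real) > 1" shows "pi_q q (\<lambda>_. True) = (1/q) / (1 - 1/q)"
proof -
  have "pi_q q (\<lambda>_. True) = (\<Sum>j. (1/q) * (1/q) ^ j)" unfolding pi_q_def by simp
  also have "\<dots> = (1/q) * (\<Sum>j. (1/q) ^ j)"
    by (rule suminf_mult, rule summable_geometric) (use assms in simp)
  also have "\<dots> = (1/q) / (1 - 1/q)" using assms by (simp add: suminf_geometric)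
  finally show ?thesis .
qed

lemma pi_zero: "pi_q q (\<lambda>_. False) = 0" unfolding pi_q_def by simp

lemma pi_le_ones: assumes "(q::real) > 1" shows "pi_q q e \<le> (1/q) / (1 - 1/q)"
  using pi_mono[OF assms, of e "\<lambda>_. True"] pi_ones[OF assms] by simp

lemma pi_zero_prefix: assumes "(q::real) > 1" "\<And>j. j < n \<Longrightarrow> \<not> e j"
  shows "pi_q q e = (1/q) ^ n * pi_q q (\<lambda>j. e (j + n))"
  using pi_shift[OF assms(1), of e n] assms(2) by simp

lemma pi_zero_prefix_le: assumes "(q::real) > 1" "\<And>j. j < n \<Longrightarrow> \<not> e j"
  shows "pi_q q e \<le> (1/q) ^ n * ((1/q) / (1 - 1/q))"
proof -
  have "pi_q q e = (1/q)^n * pi_q q (\<lambda>j. e (j+n))" by (rule pi_zero_prefix[OF assms])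
  also have "\<dots> \<le> (1/q)^n * ((1/q)/(1-1/q))"
    by (rule mult_left_mono[OF pi_le_ones[OF assms(1)]]) (use assms(1) in simp)
  finally show ?thesis .
qed

lemma pi_even: assumes "(q::real) > 1" shows "pi_q q (\<lambda>j. even j) = 1/q / (1 - (1/q)^2)"
proof -
  have e: "(\<lambda>j::nat. even (j + 2)) = (\<lambda>j. even j)" by auto
  have "pi_q q (\<lambda>j. even j) = (\<Sum>j<2. bv (even j) * (1/q) ^ Suc j) + (1/q)^2 * pi_q q (\<lambda>j. even (j + 2))"
    by (rule pi_shift[OF assms])
  also have "(\<Sum>j<2. bv (even j) * (1/q) ^ Suc j) = 1/q" by (simp add: numeral_2_eq_2)
  finally have "pi_q q (\<lambda>j. even j) = 1/q + (1/q)^2 * pi_q q (\<lambda>j. even j)" unfolding e .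
  moreover have "(1/q)^2 < 1" using assms by (simp add: power_less_one_iff)
  ultimately show ?thesis
    by (metis (no_types, lifting) add_diff_cancel_right' diff_gt_0_iff_gt eq_divide_eq
        less_numeral_extra(3) right_diff_distrib' mult.right_neutral mult.commute)
qed

lemma pi_odd: assumes "(q::real) > 1" shows "pi_q q (\<lambda>j. odd j) = (1/q)^2 / (1 - (1/q)^2)"
proof -
  have e: "(\<lambda>j::nat. odd (j + 2)) = (\<lambda>j. odd j)" by auto
  have "pi_q q (\<lambda>j. odd j) = (\<Sum>j<2. bv (odd j) * (1/q) ^ Suc j) + (1/q)^2 * pi_q q (\<lambda>j. odd (j + 2))"
    by (rule pi_shift[OF assms])
  also have "(\<Sum>j<2. bv (odd j) * (1/q) ^ Suc j) = (1/q)^2" by (simp add: numeral_2_eq_2)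
  finally have "pi_q q (\<lambda>j. odd j) = (1/q)^2 + (1/q)^2 * pi_q q (\<lambda>j. odd j)" unfolding e .
  moreover have "(1/q)^2 < 1" using assms by (simp add: power_less_one_iff)
  ultimately show ?thesis
    by (metis (no_types, lifting) add_diff_cancel_right' diff_gt_0_iff_gt eq_divide_eq
        less_numeral_extra(3) right_diff_distrib' mult.right_neutral mult.commute)
qed

definition xseq :: "nat \<Rightarrow> nat \<Rightarrow> bool" where "xseq k = (\<lambda>j. j < k-2 \<or> odd (j - (k-2)))"
definition yseq :: "nat \<Rightarrow> nat \<Rightarrow> bool" where "yseq k = (\<lambda>j. k-2 \<le> j \<and> even (j - (k-2)))"
abbreviation wseq where "wseq k \<equiv> pre_per (replicate (k - 3) False) (False # replicate (k - 1) True)"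
abbreviation vseq where "vseq k \<equiv> pre_per (replicate (k - 3) True) (True # replicate (k - 1) False)"

lemma S_iff: "e \<in> S_set k \<longleftrightarrow> (\<forall>n. (\<not> e n \<longrightarrow> (\<exists>i\<in>{1..k-1}. \<not> e (n+i))) \<and> (e n \<longrightarrow> (\<exists>i\<in>{1..k-1}. e (n+i))))"
  unfolding S_set_def by auto

lemma zero_S: "k \<ge> 2 \<Longrightarrow> (\<lambda>_. False) \<in> S_set k" unfolding S_set_def by (auto intro!: bexI[of _ 1])
lemma ones_S: "k \<ge> 2 \<Longrightarrow> (\<lambda>_. True) \<in> S_set k" unfolding S_set_def by (auto intro!: bexI[of _ 1])
lemma ones_pre_per: "pre_per [] [True] = (\<lambda>_. True)" unfolding pre_per_def by auto

lemma xseq_S: assumes "k \<ge> 4" shows "xseq k \<in> S_set k"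
  unfolding S_iff
proof (intro allI conjI impI)
  fix n
  have i2: "(2::nat) \<in> {1..k-1}" and i1: "(1::nat) \<in> {1..k-1}" using assms by auto
  show "\<exists>i\<in>{1..k-1}. \<not> xseq k (n+i)" if "\<not> xseq k n"
  proof -
    have "\<not> xseq k (n+2)" using that unfolding xseq_def by (auto; presburger)
    then show ?thesis using i2 by blast
  qed
  show "\<exists>i\<in>{1..k-1}. xseq k (n+i)" if "xseq k n"
  proof (cases "xseq k (n+1)")
    case True then show ?thesis using i1 by blast
  next
    case False
    then have "xseq k (n+2)" unfolding xseq_def by (auto; presburger)
    then show ?thesis using i2 by blast
  qed
qed

lemma yseq_S: assumes "k \<ge> 4" shows "yseq k \<in> S_set k"
  unfolding S_iff
proof (intro allI conjI impI)
  fix n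
  have i2: "(2::nat) \<in> {1..k-1}" and i1: "(1::nat) \<in> {1..k-1}" using assms by auto
  show "\<exists>i\<in>{1..k-1}. yseq k (n+i)" if "yseq k n"
  proof -
    have "yseq k (n+2)" using that unfolding yseq_def by (auto; presburger)
    then show ?thesis using i2 by blast
  qed
  show "\<exists>i\<in>{1..k-1}. \<not> yseq k (n+i)" if "\<not> yseq k n"
  proof (cases "yseq k (n+1)")
    case False then show ?thesis using i1 by blast
  next
    case True
    then have "\<not> yseq k (n+2)" unfolding yseq_def by (auto; presburger)
    then show ?thesis using i2 by blast
  qed
qed

lemma shift_S: assumes "e \<in> S_set k" shows "(\<lambda>j. e (j + n)) \<in> S_set k"
  using assms unfolding S_iff
  by (metis (no_types, lifting) add.assoc add.commute)

lemma prefix_S: assumes "e \<in> S_set k" "\<not> (\<forall>j<k-1. e j)" "k \<ge> 2"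
  shows "(\<lambda>j. if j < n then False else e (j - n)) \<in> S_set k" (is "?e \<in> _")
  unfolding S_iff
proof (intro allI conjI impI)
  fix p
  have i1: "(1::nat) \<in> {1..k-1}" using assms by auto
  show "\<exists>i\<in>{1..k-1}. ?e (p+i)" if "?e p"
  proof -
    from that have pn: "p \<ge> n" "e (p - n)" by (auto split: if_splits)
    then obtain i where "i \<in> {1..k-1}" "e (p - n + i)" using assms(1) unfolding S_iff by blast
    moreover have "p - n + i = p + i - n" using pn by simp
    ultimately show ?thesis using pn by (intro bexI[of _ i]) auto
  qed
  show "\<exists>i\<in>{1..k-1}. \<not> ?e (p+i)" if "\<not> ?e p"
  proof (cases "p \<ge> n")
    case True
    then have "\<not> e (p - n)" using that by auto
    then obtain i where "i \<in> {1..k-1}" "\<not> e (p - n + i)" using assms(1) unfolding S_iff by blast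
    moreover have "p - n + i = p + i - n" using True by simp
    ultimately show ?thesis using True by (intro bexI[of _ i]) auto
  next
    case False
    show ?thesis
    proof (cases "p + 1 < n")
      case True then show ?thesis using i1 by (intro bexI[of _ 1]) auto
    next
      case F2: False
      then have pn: "p + 1 = n" using False by simp
      obtain j where j: "j < k-1" "\<not> e j" using assms(2) by blast
      show ?thesis
      proof (rule bexI[of _ "j+1"])
        show "\<not> ?e (p + (j+1))" using j pn by auto
        show "j + 1 \<in> {1..k-1}" using j by auto
      qed
    qed
  qed
qed

lemma wseq_low: assumes "k \<ge> 4" "j < k - 2" shows "\<not> wseq k j"
  using assms unfolding pre_per_def by (auto simp: nth_Cons')

lemma wseq_mid: assumes "k \<ge> 4" "j < k - 1" shows "wseq k (j + (k - 2))"
proof -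
  have "(j + (k-2) - (k-3)) mod k = j + 1" using assms by auto
  then show ?thesis using assms unfolding pre_per_def by (auto simp: nth_Cons')
qed

lemma vseq_mid: assumes "k \<ge> 4" "j < k - 1" shows "\<not> vseq k (j + (k - 2))"
proof -
  have "(j + (k-2) - (k-3)) mod k = j + 1" using assms by auto
  then show ?thesis using assms unfolding pre_per_def by (auto simp: nth_Cons')
qed

lemma geo_suc: assumes "(r::real) \<noteq> 1" shows "(\<Sum>j<n. r ^ Suc j) = r * (1 - r^n) / (1 - r)"
proof -
  have "(\<Sum>j<n. r ^ Suc j) = r * (\<Sum>j<n. r ^ j)" by (simp add: sum_distrib_left)
  also have "\<dots> = r * ((r^n - 1) / (r - 1))" using geometric_sum[OF assms] by simp
  also have "\<dots> = r * (1 - r^n) / (1 - r)" using assms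
    by (simp add: field_simps)
  finally show ?thesis .
qed

lemma pi_x: assumes "(q::real) > 1" "k \<ge> 4"
  shows "pi_q q (xseq k) = (\<Sum>j<k-2. (1/q) ^ Suc j) + (1/q)^(k-2) * ((1/q)^2 / (1 - (1/q)^2))"
proof -
  have "pi_q q (xseq k) = (\<Sum>j<k-2. bv (xseq k j) * (1/q) ^ Suc j) + (1/q)^(k-2) * pi_q q (\<lambda>j. xseq k (j + (k-2)))"
    by (rule pi_shift[OF assms(1)])
  moreover have "(\<Sum>j<k-2. bv (xseq k j) * (1/q) ^ Suc j) = (\<Sum>j<k-2. (1/q) ^ Suc j)"
    by (intro sum.cong) (auto simp: xseq_def)
  moreover have "(\<lambda>j. xseq k (j + (k-2))) = (\<lambda>j. odd j)" by (auto simp: xseq_def)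
  ultimately show ?thesis using pi_odd[OF assms(1)] by simp
qed

lemma pi_y: assumes "(q::real) > 1" "k \<ge> 4"
  shows "pi_q q (yseq k) = (1/q)^(k-2) * ((1/q) / (1 - (1/q)^2))"
proof -
  have "pi_q q (yseq k) = (1/q)^(k-2) * pi_q q (\<lambda>j. yseq k (j + (k-2)))"
    by (rule pi_zero_prefix[OF assms(1)]) (auto simp: yseq_def)
  moreover have "(\<lambda>j. yseq k (j + (k-2))) = (\<lambda>j. even j)" by (auto simp: yseq_def)
  ultimately show ?thesis using pi_even[OF assms(1)] by simp
qed

lemma pi_v_le: assumes "(q::real) > 1" "k \<ge> 4"
  shows "pi_q q (vseq k) \<le> (\<Sum>j<k-2. (1/q) ^ Suc j) + (1/q)^(k-2) * ((1/q)^(k-1) * ((1/q) / (1 - 1/q)))"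
proof -
  have e: "pi_q q (vseq k) = (\<Sum>j<k-2. bv (vseq k j) * (1/q) ^ Suc j) + (1/q)^(k-2) * pi_q q (\<lambda>j. vseq k (j + (k-2)))"
    by (rule pi_shift[OF assms(1)])
  have s: "(\<Sum>j<k-2. bv (vseq k j) * (1/q) ^ Suc j) \<le> (\<Sum>j<k-2. (1/q) ^ Suc j)"
    using assms(1) by (intro sum_mono) auto
  have t: "pi_q q (\<lambda>j. vseq k (j + (k-2))) \<le> (1/q)^(k-1) * ((1/q) / (1 - 1/q))"
    by (rule pi_zero_prefix_le[OF assms(1)]) (use vseq_mid[OF assms(2)] in auto)
  have "(1/q)^(k-2) * pi_q q (\<lambda>j. vseq k (j + (k-2))) \<le> (1/q)^(k-2) * ((1/q)^(k-1) * ((1/q) / (1 - 1/q)))"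
    by (rule mult_left_mono[OF t]) (use assms in simp)
  then show ?thesis using e s by linarith
qed

lemma pi_w_le: assumes "(q::real) > 1" "k \<ge> 4"
  shows "pi_q q (wseq k) \<le> (1/q)^(k-2) * ((1/q) / (1 - 1/q))"
  by (rule pi_zero_prefix_le[OF assms(1)]) (use wseq_low[OF assms(2)] in auto)

lemma pi_w_ge: assumes "(q::real) > 1" "k \<ge> 4"
  shows "(1/q)^(k-2) * (\<Sum>j<k-1. (1/q) ^ Suc j) \<le> pi_q q (wseq k)"
proof -
  have "pi_q q (wseq k) = (1/q)^(k-2) * pi_q q (\<lambda>j. wseq k (j + (k-2)))"
    by (rule pi_zero_prefix[OF assms(1)]) (use wseq_low[OF assms(2)] in auto)
  moreover have "(\<Sum>j<k-1. (1/q) ^ Suc j) \<le> pi_q q (\<lambda>j. wseq k (j + (k-2)))"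
    by (rule pi_ge_sum[OF assms(1)]) (use wseq_mid[OF assms(2)] in auto)
  moreover have "(0::real) \<le> (1/q)^(k-2)" using assms by simp
  ultimately show ?thesis by (simp add: mult_left_mono)
qed

definition phi :: "nat \<Rightarrow> real \<Rightarrow> real" where "phi k x = (\<Sum>j<k. (1/x) ^ Suc j)"

lemma phi_strict: assumes "0 < x" "x < y" "k \<ge> 1" shows "phi k y < phi k x"
  unfolding phi_def
proof (rule sum_strict_mono_ex1)
  have a: "1/y \<le> 1/x" "0 \<le> 1/y" using assms by (auto simp: frac_le)
  show "\<forall>j\<in>{..<k}. (1/y) ^ Suc j \<le> (1/x) ^ Suc j"
    using power_mono[OF a(1) a(2)] by blast
  show "\<exists>j\<in>{..<k}. (1/y) ^ Suc j < (1/x) ^ Suc j" using assms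
    by (intro bexI[of _ 0]) (auto simp: divide_strict_left_mono)
qed simp

lemma phi_eq_iff: assumes "x > 0"
  shows "x ^ k - (\<Sum>i<k. x ^ i) = 0 \<longleftrightarrow> phi k x = 1"
proof -
  have "x^k * phi k x = (\<Sum>j<k. x^k * (1/x) ^ Suc j)" unfolding phi_def by (simp add: sum_distrib_left)
  also have "\<dots> = (\<Sum>j<k. x ^ (k - Suc j))"
  proof (intro sum.cong refl)
    fix j assume "j \<in> {..<k}"
    then have "k = (k - Suc j) + Suc j" by simp
    then have "x^k = x ^ (k - Suc j) * x ^ Suc j" by (metis power_add)
    then show "x^k * (1/x) ^ Suc j = x ^ (k - Suc j)" using assms by (simp add: power_one_over)
  qed
  also have "\<dots> = (\<Sum>i<k. x ^ i)" by (rule sum.nat_diff_reindex)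
  finally have e: "x^k * phi k x = (\<Sum>i<k. x ^ i)" .
  have "x^k > 0" using assms by simp
  then show ?thesis using e
    by (metis diff_self eq_iff_diff_eq_0 mult.right_neutral mult_left_cancel less_irrefl)
qed

lemma qk_facts: assumes "k \<ge> 4"
  shows "19/10 < qk k" "qk k < 2" "phi k (qk k) = 1"
proof -
  have c: "continuous_on {19/10..2} (phi k)" unfolding phi_def
    by (intro continuous_intros) auto
  have p2: "phi k 2 < 1"
  proof -
    have "phi k 2 = (1/2) * (1 - (1/2)^k) / (1 - 1/2)" unfolding phi_def by (rule geo_suc) simp
    also have "\<dots> < 1" by simp
    finally show ?thesis .
  qed
  have p19: "1 < phi k (19/10)"
  proof -
    have "(\<Sum>j<4. (1/(19/10::real)) ^ Suc j) \<le> (\<Sum>j<k. (1/(19/10)) ^ Suc j)"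
      using assms by (intro sum_mono2) auto
    moreover have "(\<Sum>j<4. (1/(19/10::real)) ^ Suc j) > 1" by (simp add: numeral_eq_Suc)
    ultimately show ?thesis unfolding phi_def by simp
  qed
  obtain x0 where x0: "19/10 \<le> x0" "x0 \<le> 2" "phi k x0 = 1"
    using IVT2'[of "phi k" 2 1 "19/10", OF _ _ _ c] p2 p19 by auto
  have a1: "x0 \<noteq> 19/10" using x0(3) p19 by (metis less_irrefl)
  have a2: "x0 \<noteq> 2" using x0(3) p2 by (metis less_irrefl)
  have x0': "19/10 < x0" "x0 < 2" using x0 a1 a2 by auto
  have "qk k = x0" unfolding qk_def
  proof (rule the_equality)
    show "1 < x0 \<and> x0 < 2 \<and> x0 ^ k - (\<Sum>i<k. x0 ^ i) = 0" using x0 x0' phi_eq_iff[of x0 k] by auto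
    fix y :: real assume y: "1 < y \<and> y < 2 \<and> y ^ k - (\<Sum>i<k. y ^ i) = 0"
    then have "phi k y = 1" using phi_eq_iff[of y k] by auto
    show "y = x0"
    proof (rule ccontr)
      assume "y \<noteq> x0"
      then have "y < x0 \<or> x0 < y" by auto
      then show False using phi_strict[of y x0 k] phi_strict[of x0 y k] assms x0 x0' y \<open>phi k y = 1\<close>
        by auto
    qed
  qed
  then show "19/10 < qk k" "qk k < 2" "phi k (qk k) = 1" using x0 x0' by auto
qed

lemma g_eq: assumes "(q::real) > 0" "k \<ge> 1"
  shows "g_qk q k x = (1/q)^k * (x - 1) + phi k q"
proof -
  have "(\<Sum>j\<in>{1..k-1}. 1 / q ^ j) = (\<Sum>j<k-1. (1/q) ^ Suc j)"
    by (simp add: sum.atLeast1_atMost_eq power_one_over)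
  moreover have "phi k q = (\<Sum>j<k-1. (1/q) ^ Suc j) + (1/q)^k"
  proof -
    have "k = Suc (k-1)" using assms by simp
    then have "phi k q = (\<Sum>j<Suc (k-1). (1/q) ^ Suc j)" unfolding phi_def by simp
    also have "\<dots> = (\<Sum>j<k-1. (1/q) ^ Suc j) + (1/q)^Suc (k-1)" by simp
    finally show ?thesis using \<open>k = Suc (k-1)\<close> by simp
  qed
  ultimately show ?thesis unfolding g_qk_def by (simp add: algebra_simps power_one_over diff_divide_distrib)
qed

lemma g_iter: assumes "(q::real) > 0" "k \<ge> 1"
  shows "(g_qk q k ^^ i) x = 1 + (phi k q - 1) * (\<Sum>l<i. ((1/q)^k)^l) + ((1/q)^k)^i * (x - 1)"
proof (induction i)
  case 0 then show ?case by simp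
next
  case (Suc i)
  have "(g_qk q k ^^ Suc i) x = g_qk q k ((g_qk q k ^^ i) x)" by simp
  also have "\<dots> = (1/q)^k * ((g_qk q k ^^ i) x - 1) + phi k q" by (rule g_eq[OF assms])
  also have "\<dots> = 1 + (phi k q - 1) * (1 + (1/q)^k * (\<Sum>l<i. ((1/q)^k)^l)) + ((1/q)^k)^Suc i * (x - 1)"
    unfolding Suc by (simp add: algebra_simps)
  also have "1 + (1/q)^k * (\<Sum>l<i. ((1/q)^k)^l) = (\<Sum>l<Suc i. ((1/q)^k)^l)"
    by (simp add: sum.lessThan_Suc_shift sum_distrib_left del: sum.lessThan_Suc)
  finally show ?case .
qed

lemma g_iter_diff: assumes "(q::real) > 0" "k \<ge> 1"
  shows "(g_qk q k ^^ i) x = (g_qk q k ^^ i) 1 + ((1/q)^k)^i * (x - 1)"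
  using g_iter[OF assms, of i x] g_iter[OF assms, of i 1] by simp

lemma g_iter_le_iff: assumes "(q::real) > 0" "k \<ge> 1"
  shows "(g_qk q k ^^ i) x \<le> (g_qk q k ^^ i) y \<longleftrightarrow> x \<le> y"
proof -
  have "((1/q)^k)^i > 0" using assms by simp
  then show ?thesis unfolding g_iter_diff[OF assms, of i x] g_iter_diff[OF assms, of i y]
    by (simp add: mult_le_cancel_left_pos)
qed

lemma g_iter_less_iff: assumes "(q::real) > 0" "k \<ge> 1"
  shows "(g_qk q k ^^ i) x < (g_qk q k ^^ i) y \<longleftrightarrow> x < y"
  using g_iter_le_iff[OF assms] by (meson not_le)

lemma image_Int_interval:
  fixes h :: "real \<Rightarrow> real"
  assumes "\<And>x y. h x \<le> h y \<longleftrightarrow> x \<le> y"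
  shows "h ` A \<inter> {h a..h b} = h ` (A \<inter> {a..b})"
  using assms by auto

lemma Lm_eq: assumes "a \<in> X" "\<And>x. x \<in> X \<Longrightarrow> a \<le> x" shows "Lm X = a"
  unfolding Lm_def using assms by (intro Least_equality) auto

lemma Rm_eq: assumes "a \<in> X" "\<And>x. x \<in> X \<Longrightarrow> x \<le> a" shows "Rm X = a"
  unfolding Rm_def using assms by (intro Greatest_equality) auto

lemma Lm_image: assumes "a \<in> X" "\<And>x. x \<in> X \<Longrightarrow> a \<le> x" "\<And>x y. h x \<le> h y \<longleftrightarrow> x \<le> y"
  shows "Lm (h ` X) = h a"
  using assms by (intro Lm_eq) auto

lemma Rm_image: assumes "a \<in> X" "\<And>x. x \<in> X \<Longrightarrow> x \<le> a" "\<And>x y. (h::real\<Rightarrow>real) x \<le> h y \<longleftrightarrow> x \<le> y"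
  shows "Rm (h ` X) = h a"
  using assms by (intro Rm_eq) auto

lemma pow_km1: assumes "k \<ge> 4" shows "(r::real)^(k-1) = r^(k-2) * r"
proof -
  have "k - 1 = Suc (k-2)" using assms by arith
  then show ?thesis by (simp only: power_Suc2)
qed

lemma pow_k: assumes "k \<ge> 1" shows "(r::real)^k = r^(k-1) * r"
proof -
  have "k = Suc (k-1)" using assms by arith
  then have "r^k = r^(Suc (k-1))" by simp
  then show ?thesis by (simp only: power_Suc2)
qed

lemma a_bound: assumes "1/2 < (r::real)" "r < 53/100" "k \<ge> 4"
  shows "r^(k-2) \<le> r^2" "r^(k-2) * (1 + r) < 1/2" "0 < r^(k-2)" "r^(k-2) < 2809/10000"
proof -
  show a: "r^(k-2) \<le> r^2" using assms by (intro power_decreasing) auto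
  have "r^2 < (53/100)^2" using assms by (intro power_strict_mono) auto
  then show a2: "r^(k-2) < 2809/10000" using a by (simp add: power2_eq_square)
  moreover have "1 + r < 153/100" using assms by simp
  ultimately have "r^(k-2) * (1 + r) < 2809/10000 * (153/100)" using a2
    using assms by (intro mult_strict_mono) auto
  then show "r^(k-2) * (1 + r) < 1/2" by simp
  show "0 < r^(k-2)" using assms by simp
qed

lemma one_over: assumes "1/2 < (r::real)" "r < 53/100"
  shows "1/(1-r) = (1+r)/(1-r^2)" "0 < 1 - r^2"
proof -
  have p: "1 - r \<noteq> 0" "1 + r \<noteq> 0" using assms by auto
  have f: "1 - r^2 = (1-r)*(1+r)" by (simp add: algebra_simps power2_eq_square)
  show "1/(1-r) = (1+r)/(1-r^2)" unfolding f using p by simp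
  have "r^2 < (53/100)^2" using assms by (intro power_strict_mono) auto
  then have "r^2 < 2809/10000" by (simp add: power2_eq_square)
  then show "0 < 1 - r^2" by simp
qed

lemma div_1mr: assumes "1/2 < (r::real)" "r < 53/100"
  shows "x/(1-r) = x*((1+r)*(1/(1-r^2)))"
proof -
  have "x/(1-r) = x*(1/(1-r))" by simp
  also have "1/(1-r) = (1+r)*(1/(1-r^2))" using one_over(1)[OF assms] by simp
  finally show ?thesis .
qed

lemma v_le_x_num: assumes "1/2 < (r::real)" "r < 53/100" "k \<ge> 4"
  shows "r^(k-1) * (r / (1 - r)) \<le> r^2 / (1 - r^2)"
proof -
  note o = one_over[OF assms(1,2)]
  define w where "w = 1 / (1 - r^2)"
  have w0: "0 \<le> w" using o(2) w_def by simp
  have e1: "r / (1 - r) = r * ((1 + r) * w)" unfolding w_def by (rule div_1mr[OF assms(1,2)])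
  have e2: "r^2 / (1 - r^2) = r^2 * w" using w_def by simp
  have "r^(k-1) * (r * ((1 + r) * w)) = (r^2 * w) * (r^(k-2) * (1+r))"
    unfolding pow_km1[OF assms(3)] by (simp add: algebra_simps power2_eq_square)
  also have "\<dots> \<le> (r^2 * w) * 1"
    using a_bound[OF assms] w0 by (intro mult_left_mono) auto
  finally show ?thesis unfolding e1 e2 by simp
qed

lemma y_le_w_num: assumes "1/2 < (r::real)" "r < 53/100" "k \<ge> 4"
  shows "r / (1 - r^2) \<le> r * (1 - r^(k-1)) / (1 - r)"
proof -
  note o = one_over[OF assms(1,2)]
  define w where "w = 1 / (1 - r^2)"
  have w0: "0 \<le> w" using o(2) w_def by simp
  have e1: "r * (1 - r^(k-1)) / (1 - r) = r * (1 - r^(k-1)) * ((1 + r) * w)"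
    unfolding w_def by (rule div_1mr[OF assms(1,2)])
  have e2: "r / (1 - r^2) = r * w" using w_def by simp
  have a: "r^(k-2) * (1+r) \<le> 1" using a_bound[OF assms] by simp
  have "(r*w) * 1 \<le> (r*w) * ((1 - r^(k-1)) * (1 + r))"
  proof (rule mult_left_mono)
    have "(1 - r^(k-1)) * (1 + r) = 1 + r * (1 - r^(k-2) * (1+r))"
      unfolding pow_km1[OF assms(3)] by (simp add: algebra_simps)
    moreover have "0 \<le> r * (1 - r^(k-2) * (1+r))" using a assms by simp
    ultimately show "1 \<le> (1 - r^(k-1)) * (1 + r)" by simp
  qed (use assms w0 in simp)
  then show ?thesis unfolding e1 e2 by (simp add: algebra_simps)
qed

lemma W_num: assumes "1/2 < (r::real)" "r < 53/100" "k \<ge> 4"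
  shows "r^(k-2) * (r / (1 - r)) < 1" "r^(k-2) * (r / (1 - r)) < r * (1 - r^(k-1)) / (1 - r)"
proof -
  note ab = a_bound[OF assms]
  have r1: "0 < 1 - r" "0 < 1 + r" "0 < r" using assms by auto
  have "r^(k-2) * r < 2809/10000 * (53/100)" using ab r1 assms
    by (intro mult_strict_mono) auto
  then have "r^(k-2) * r < 1 - r" using assms by simp
  then have "r^(k-2) * r / (1 - r) < 1" using r1 by (simp add: divide_less_eq)
  then show "r^(k-2) * (r / (1 - r)) < 1" by simp
  have "r^(k-2) * (1 + r) * r < 1 * r" using ab r1 by (intro mult_strict_right_mono) auto
  then have "r^(k-2) * r < r * (1 - r^(k-1))" unfolding pow_km1[OF assms(3)]
    by (simp add: algebra_simps)
  then have "r^(k-2) * r / (1 - r) < r * (1 - r^(k-1)) / (1 - r)" using r1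
    by (intro divide_strict_right_mono) auto
  then show "r^(k-2) * (r / (1 - r)) < r * (1 - r^(k-1)) / (1 - r)" by simp
qed

context fixes q :: real and k :: nat
  assumes q1: "q > 1" and k4: "k \<ge> 4" and rlo: "1/2 < 1/q" and rhi: "1/q < 53/100"
begin

lemma piv_le_pix: "pi_q q (vseq k) \<le> pi_q q (xseq k)"
proof -
  have "(1/q)^(k-2) * ((1/q)^(k-1) * ((1/q) / (1 - 1/q))) \<le> (1/q)^(k-2) * ((1/q)^2 / (1 - (1/q)^2))"
    using v_le_x_num[OF rlo rhi k4] q1 by (intro mult_left_mono) auto
  then show ?thesis using pi_v_le[OF q1 k4] pi_x[OF q1 k4] by linarith
qed

lemma piy_le_piw: "pi_q q (yseq k) \<le> pi_q q (wseq k)"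
proof -
  have "(1/q)^(k-2) * ((1/q) / (1 - (1/q)^2)) \<le> (1/q)^(k-2) * (\<Sum>j<k-1. (1/q) ^ Suc j)"
    using y_le_w_num[OF rlo rhi k4] q1 geo_suc[of "1/q" "k-1"] by (intro mult_left_mono) auto
  then show ?thesis using pi_y[OF q1 k4] pi_w_ge[OF q1 k4] by linarith
qed

lemma scaling:
  "pi_q q ` S_set k \<inter> {0..(1/q)^n * pi_q q (wseq k)} =
   (\<lambda>t. (1/q)^n * t) ` (pi_q q ` S_set k \<inter> {0..pi_q q (wseq k)})"
proof (intro equalityI subsetI)
  have R: "0 < (1/q)^n" using q1 by simp
  have W: "pi_q q (wseq k) < 1" using pi_w_le[OF q1 k4] W_num(1)[OF rlo rhi k4] by linarith
  fix t assume "t \<in> pi_q q ` S_set k \<inter> {0..(1/q)^n * pi_q q (wseq k)}"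
  then obtain e where e: "e \<in> S_set k" "t = pi_q q e" "0 \<le> t" "t \<le> (1/q)^n * pi_q q (wseq k)" by auto
  have z: "\<not> e j" if "j < n" for j
  proof
    assume "e j"
    then have "(1/q) ^ Suc j \<le> t" using pi_ge_one[OF q1] e by auto
    moreover have "(1/q)^n \<le> (1/q) ^ Suc j" using that q1 by (intro power_decreasing) auto
    moreover have "(1/q)^n * pi_q q (wseq k) < (1/q)^n" using R W by simp
    ultimately show False using e by linarith
  qed
  have te: "t = (1/q)^n * pi_q q (\<lambda>j. e (j + n))" using pi_zero_prefix[OF q1 z] e by simp
  have "pi_q q (\<lambda>j. e (j + n)) \<le> pi_q q (wseq k)" using e(4) te R by simp
  moreover have "0 \<le> pi_q q (\<lambda>j. e (j + n))" by (rule pi_nonneg[OF q1])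
  moreover have "(\<lambda>j. e (j + n)) \<in> S_set k" by (rule shift_S[OF e(1)])
  ultimately show "t \<in> (\<lambda>t. (1/q)^n * t) ` (pi_q q ` S_set k \<inter> {0..pi_q q (wseq k)})"
    using te by auto
next
  have R: "0 < (1/q)^n" using q1 by simp
  fix t assume "t \<in> (\<lambda>t. (1/q)^n * t) ` (pi_q q ` S_set k \<inter> {0..pi_q q (wseq k)})"
  then obtain e' where e': "e' \<in> S_set k" "t = (1/q)^n * pi_q q e'" "0 \<le> pi_q q e'" "pi_q q e' \<le> pi_q q (wseq k)"
    by auto
  have ns: "\<not> (\<forall>j<k-1. e' j)"
  proof
    assume "\<forall>j<k-1. e' j"
    then have "(\<Sum>j<k-1. (1/q) ^ Suc j) \<le> pi_q q e'" using pi_ge_sum[OF q1] by auto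
    moreover have "(\<Sum>j<k-1. (1/q) ^ Suc j) = (1/q) * (1 - (1/q)^(k-1)) / (1 - 1/q)"
      using q1 by (intro geo_suc) auto
    ultimately show False using W_num(2)[OF rlo rhi k4] pi_w_le[OF q1 k4] e'(4) by linarith
  qed
  define e where "e = (\<lambda>j. if j < n then False else e' (j - n))"
  have eS: "e \<in> S_set k" unfolding e_def by (rule prefix_S[OF e'(1) ns]) (use k4 in auto)
  have "pi_q q e = (1/q)^n * pi_q q (\<lambda>j. e (j + n))" by (rule pi_zero_prefix[OF q1]) (auto simp: e_def)
  moreover have "(\<lambda>j. e (j + n)) = e'" by (auto simp: e_def)
  ultimately have "pi_q q e = t" using e' by simp
  moreover have "t \<le> (1/q)^n * pi_q q (wseq k)" using e' R by (simp add: mult_left_mono)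
  moreover have "0 \<le> t" using e' R by simp
  ultimately show "t \<in> pi_q q ` S_set k \<inter> {0..(1/q)^n * pi_q q (wseq k)}" using eS by force
qed

end

context fixes q :: real and k :: nat
  assumes q1: "q > 1" and k4: "k \<ge> 4" and rlo: "1/2 < 1/q" and rhi: "1/q < 53/100"
begin

lemma P_eq: assumes "i \<le> m"
  shows "P_set m k i q = (\<lambda>t. (g_qk q k ^^ i) 1 + ((1/q)^k)^m * t) ` (pi_q q ` S_set k \<inter> {0..pi_q q (wseq k)})"
proof -
  let ?G = "g_qk q k ^^ i"
  let ?R = "(1/q) ^ ((m - i) * k)"
  let ?T0 = "pi_q q ` S_set k \<inter> {0..pi_q q (wseq k)}"
  have q0: "q > 0" and k1: "k \<ge> 1" using q1 k4 by auto
  have "P_set m k i q = ?G ` ((\<lambda>e. pi_q q e + 1) ` S_set k) \<inter> {?G 1 .. ?G (1 + ?R * pi_q q (wseq k))}"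
    unfolding P_set_def by simp
  also have "\<dots> = ?G ` ((\<lambda>e. pi_q q e + 1) ` S_set k \<inter> {1 .. 1 + ?R * pi_q q (wseq k)})"
    by (rule image_Int_interval) (rule g_iter_le_iff[OF q0 k1])
  also have "(\<lambda>e. pi_q q e + 1) ` S_set k \<inter> {1 .. 1 + ?R * pi_q q (wseq k)}
      = (\<lambda>t. 1 + t) ` (pi_q q ` S_set k \<inter> {0 .. ?R * pi_q q (wseq k)})"
    by (auto simp: image_iff add.commute)
  also have "pi_q q ` S_set k \<inter> {0 .. ?R * pi_q q (wseq k)} = (\<lambda>t. ?R * t) ` ?T0"
    by (rule scaling[OF q1 k4 rlo rhi])
  also have "?G ` (\<lambda>t. 1 + t) ` (\<lambda>t. ?R * t) ` ?T0 = (\<lambda>t. ?G 1 + ((1/q)^k)^m * t) ` ?T0"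
    unfolding image_image
  proof (rule image_cong[OF refl])
    fix t
    have h1: "?G (1 + ?R * t) = ?G 1 + ((1/q)^k)^i * (?R * t)"
      using g_iter_diff[OF q0 k1, of i "1 + ?R * t"] by simp
    have h2: "((1/q)^k)^i * ?R = ((1/q)^k)^m"
    proof -
      have "?R = ((1/q)^k)^(m-i)" by (simp add: power_mult mult.commute)
      then show ?thesis using assms by (simp add: power_add[symmetric])
    qed
    have "((1/q)^k)^i * (?R * t) = ((1/q)^k)^m * t" using h2 by (metis mult.assoc)
    then show "?G (1 + ?R * t) = ?G 1 + ((1/q)^k)^m * t" using h1 by simp
  qed
  finally show ?thesis .
qed

lemma Q_eq:
  "Q_set m k q = (g_qk q k ^^ m) ` (pi_q q ` S_set k \<inter> {pi_q q (vseq k) .. pi_q q (\<lambda>_. True)})"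
proof -
  have q0: "q > 0" and k1: "k \<ge> 1" using q1 k4 by auto
  show ?thesis unfolding Q_set_def ones_pre_per
    by (rule image_Int_interval) (rule g_iter_le_iff[OF q0 k1])
qed

lemma T0_max: obtains t0 where "t0 \<in> pi_q q ` S_set k \<inter> {0..pi_q q (wseq k)}"
   "\<And>t. t \<in> pi_q q ` S_set k \<inter> {0..pi_q q (wseq k)} \<Longrightarrow> t \<le> t0"
proof -
  have "compact (pi_q q ` S_set k \<inter> {0..pi_q q (wseq k)})"
    by (intro compact_Int_closed compact_piS[OF q1]) auto
  moreover have "pi_q q (yseq k) \<in> pi_q q ` S_set k \<inter> {0..pi_q q (wseq k)}"
    by (rule IntI[OF imageI[OF yseq_S[OF k4]]], rule atLeastAtMost_iff[THEN iffD2], rule conjI,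
        rule pi_nonneg[OF q1], rule piy_le_piw[OF q1 k4 rlo rhi])
  ultimately obtain s where s: "s \<in> pi_q q ` S_set k \<inter> {0..pi_q q (wseq k)}"
      "\<forall>t\<in>pi_q q ` S_set k \<inter> {0..pi_q q (wseq k)}. t \<le> s"
    using compact_attains_sup[of "pi_q q ` S_set k \<inter> {0..pi_q q (wseq k)}"] by (metis empty_iff)
  show ?thesis by (rule that[of s]) (use s in auto)
qed

lemma U_min: obtains u0 where "u0 \<in> pi_q q ` S_set k \<inter> {pi_q q (vseq k) .. pi_q q (\<lambda>_. True)}"
   "\<And>t. t \<in> pi_q q ` S_set k \<inter> {pi_q q (vseq k) .. pi_q q (\<lambda>_. True)} \<Longrightarrow> u0 \<le> t"
proof -
  have "compact (pi_q q ` S_set k \<inter> {pi_q q (vseq k) .. pi_q q (\<lambda>_. True)})"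
    by (intro compact_Int_closed compact_piS[OF q1]) auto
  moreover have "pi_q q (xseq k) \<in> pi_q q ` S_set k \<inter> {pi_q q (vseq k) .. pi_q q (\<lambda>_. True)}"
    by (rule IntI[OF imageI[OF xseq_S[OF k4]]], rule atLeastAtMost_iff[THEN iffD2], rule conjI,
        rule piv_le_pix[OF q1 k4 rlo rhi], rule pi_mono[OF q1], simp)
  ultimately obtain s where s: "s \<in> pi_q q ` S_set k \<inter> {pi_q q (vseq k) .. pi_q q (\<lambda>_. True)}"
      "\<forall>t\<in>pi_q q ` S_set k \<inter> {pi_q q (vseq k) .. pi_q q (\<lambda>_. True)}. s \<le> t"
    using compact_attains_inf[of "pi_q q ` S_set k \<inter> {pi_q q (vseq k) .. pi_q q (\<lambda>_. True)}"] by (metis empty_iff)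
  show ?thesis by (rule that[of s]) (use s in auto)
qed

lemma Lm_P: assumes "i \<le> m" shows "Lm (P_set m k i q) = (g_qk q k ^^ i) 1"
proof -
  have s: "0 < ((1/q)^k)^m" using q1 by simp
  have "Lm (P_set m k i q) = (g_qk q k ^^ i) 1 + ((1/q)^k)^m * 0"
    unfolding P_eq[OF assms]
  proof (rule Lm_image)
    show "0 \<in> pi_q q ` S_set k \<inter> {0..pi_q q (wseq k)}"
      using zero_S[of k] k4 pi_zero[of q] pi_nonneg[OF q1] by (auto intro!: image_eqI[of _ _ "\<lambda>_. False"])
    show "\<And>x. x \<in> pi_q q ` S_set k \<inter> {0..pi_q q (wseq k)} \<Longrightarrow> 0 \<le> x" by auto
    show "\<And>x y. ((g_qk q k ^^ i) 1 + ((1/q)^k)^m * x \<le> (g_qk q k ^^ i) 1 + ((1/q)^k)^m * y) = (x \<le> y)"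
      using s by simp
  qed
  then show ?thesis by simp
qed

lemma Rm_P: assumes "i \<le> m" "t0 \<in> pi_q q ` S_set k \<inter> {0..pi_q q (wseq k)}"
   "\<And>t. t \<in> pi_q q ` S_set k \<inter> {0..pi_q q (wseq k)} \<Longrightarrow> t \<le> t0"
  shows "Rm (P_set m k i q) = (g_qk q k ^^ i) 1 + ((1/q)^k)^m * t0"
  unfolding P_eq[OF assms(1)]
proof (rule Rm_image[OF assms(2,3)])
  have s: "0 < ((1/q)^k)^m" using q1 by simp
  show "\<And>x y. ((g_qk q k ^^ i) 1 + ((1/q)^k)^m * x \<le> (g_qk q k ^^ i) 1 + ((1/q)^k)^m * y) = (x \<le> y)"
    using s by simp
qed

lemma Lm_Q: assumes "u0 \<in> pi_q q ` S_set k \<inter> {pi_q q (vseq k) .. pi_q q (\<lambda>_. True)}"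
   "\<And>t. t \<in> pi_q q ` S_set k \<inter> {pi_q q (vseq k) .. pi_q q (\<lambda>_. True)} \<Longrightarrow> u0 \<le> t"
  shows "Lm (Q_set m k q) = (g_qk q k ^^ m) u0"
  unfolding Q_eq
proof (rule Lm_image)
  show "u0 \<in> pi_q q ` S_set k \<inter> {pi_q q (vseq k) .. pi_q q (\<lambda>_. True)}" by (rule assms(1))
  show "\<And>x. x \<in> pi_q q ` S_set k \<inter> {pi_q q (vseq k) .. pi_q q (\<lambda>_. True)} \<Longrightarrow> u0 \<le> x"
    by (rule assms(2))
  show "\<And>x y. ((g_qk q k ^^ m) x \<le> (g_qk q k ^^ m) y) = (x \<le> y)"
    by (rule g_iter_le_iff) (use q1 k4 in auto)
qed

lemma Rm_Q: "Rm (Q_set m k q) = (g_qk q k ^^ m) (pi_q q (\<lambda>_. True))"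
  unfolding Q_eq
proof (rule Rm_image)
  show "pi_q q (\<lambda>_. True) \<in> pi_q q ` S_set k \<inter> {pi_q q (vseq k) .. pi_q q (\<lambda>_. True)}"
    using ones_S[of k] k4 pi_mono[OF q1, of "vseq k" "\<lambda>_. True"] by auto
  show "\<And>x. x \<in> pi_q q ` S_set k \<inter> {pi_q q (vseq k) .. pi_q q (\<lambda>_. True)} \<Longrightarrow> x \<le> pi_q q (\<lambda>_. True)"
    by auto
  show "\<And>x y. ((g_qk q k ^^ m) x \<le> (g_qk q k ^^ m) y) = (x \<le> y)"
    by (rule g_iter_le_iff) (use q1 k4 in auto)
qed

end

lemma phi_times: assumes "(q::real) > 1" "r = 1/q"
  shows "phi k q * (1 - r) = r * (1 - r^k)"
proof -
  have "phi k q = r * (1 - r^k) / (1 - r)" unfolding phi_def assms(2)[symmetric]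
    by (rule geo_suc) (use assms in auto)
  moreover have "1 - r \<noteq> 0" using assms by auto
  ultimately show ?thesis by simp
qed

lemma phi_closed: assumes "(q::real) > 1" "r = 1/q"
  shows "(phi k q - 1) * (1 - r) = 2 * r - 1 - r^(k+1)"
proof -
  have "(phi k q - 1) * (1 - r) = phi k q * (1 - r) - (1 - r)" by (simp add: algebra_simps)
  also have "\<dots> = r * (1 - r^k) - (1 - r)" using phi_times[OF assms] by simp
  also have "\<dots> = 2 * r - 1 - r^(k+1)" by (simp add: algebra_simps)
  finally show ?thesis .
qed

lemma numA:
  fixes P a c d G S b E :: real
  assumes "0 < P" "P \<le> 1" "0 < a" "E = P*a*c" "0 \<le> c" "c < 1/100" "0 \<le> d" "d \<le> 6/5 * E"
    "0 \<le> G" "G \<le> 11/10" "P \<le> S" "a \<le> b"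
  shows "d*G < S*(b/2 - d)"
proof -
  have ac0: "0 \<le> a*c" using assms by simp
  have "P*(a*c) \<le> 1*(a*c)" using assms ac0 by (intro mult_right_mono) auto
  then have Pac: "E \<le> a*c" using assms by (simp add: mult.assoc)
  have "a*c \<le> a*(1/100)" by (rule mult_left_mono) (use assms in auto)
  then have ac: "a*c \<le> a/100" by simp
  have d1: "d \<le> 6/5 * (a*c)" using assms Pac by linarith
  have pos: "0 < b/2 - d" using d1 ac assms by linarith
  have "d*G \<le> (6/5 * E) * (11/10)" using assms by (intro mult_mono) auto
  also have "\<dots> = 66/50 * (P * (a*c))" using assms by (simp add: mult.assoc)
  also have "\<dots> = P * (66/50 * (a*c))" by simp
  also have "\<dots> < P * (a/2 - 6/5*(a*c))"
  proof (rule mult_strict_left_mono)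
    show "66/50 * (a*c) < a/2 - 6/5*(a*c)" using ac assms by linarith
  qed (use assms in simp)
  also have "\<dots> \<le> P * (b/2 - d)" using assms d1 by (intro mult_left_mono) auto
  also have "\<dots> \<le> S * (b/2 - d)" using assms pos by (intro mult_right_mono) auto
  finally show ?thesis .
qed

lemma numC:
  fixes SX d G E Rn rhon :: real
  assumes "0 \<le> d" "d \<le> 6/5 * E" "0 \<le> G" "G \<le> 11/10"
    "SX \<ge> 2 * Rn - d" "Rn \<ge> 3/4 * rhon" "E \<le> rhon / 40" "0 < rhon"
  shows "d*G < SX"
proof -
  have "d*G \<le> (6/5*E) * (11/10)" using assms by (intro mult_mono) auto
  then show ?thesis using assms by linarith
qed

lemma rpow_bounds: assumes "1/2 < (r::real)" "r < 53/100"
  shows "r^2 < 2809/10000" "r^3 < 148877/1000000" "r^2 > 1/4"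
proof -
  have "r*r < (53/100)*(53/100)" using assms by (intro mult_strict_mono) auto
  then show "r^2 < 2809/10000" by (simp add: power2_eq_square)
  have "r*r*r < (53/100)*(53/100)*(53/100)" using assms by (intro mult_strict_mono) auto
  then show "r^3 < 148877/1000000" by (simp add: power3_eq_cube)
  have "(1/2)*(1/2) < r*r" using assms by (intro mult_strict_mono) auto
  then show "r^2 > 1/4" by (simp add: power2_eq_square)
qed

lemma scal1: assumes "1/2 < (r::real)" "r < 53/100"
  shows "1 + r - r/(1-r^2) \<ge> 1/2"
proof -
  note b = rpow_bounds[OF assms]
  have p: "1 - r^2 > 0" using b by simp
  have "2*r \<le> (1 + 2*r) * (1 - r^2)"
  proof -
    have "(1 + 2*r) * (1 - r^2) = 1 + 2*r - r^2 - 2*r^3"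
      by (simp add: algebra_simps power2_eq_square power3_eq_cube)
    then show ?thesis using b by linarith
  qed
  then have "r \<le> (1/2 + r) * (1 - r^2)" by (simp add: algebra_simps)
  then have "r/(1-r^2) \<le> 1/2 + r" using p by (simp add: divide_le_eq)
  then show ?thesis by linarith
qed

lemma scal2: assumes "1/2 < (r::real)" "r < 53/100"
  shows "1/(1-r^2) - r^2/(1-r) \<ge> 1/2"
proof -
  note b = rpow_bounds[OF assms]
  note o = one_over[OF assms]
  define w where "w = 1 / (1 - r^2)"
  have w1: "1 \<le> w" using o(2) b w_def by (simp add: le_divide_eq)
  have e1: "r^2/(1-r) = r^2 * ((1 + r) * w)" unfolding w_def by (rule div_1mr[OF assms(1,2)])
  have e: "1/(1-r^2) - r^2/(1-r) = w * (1 - (r^2 + r^3))" unfolding e1 w_def[symmetric]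
    by (simp add: algebra_simps power2_eq_square power3_eq_cube)
  have "1/2 \<le> 1 - (r^2 + r^3)" using b by linarith
  also have "\<dots> \<le> w * (1 - (r^2 + r^3))" using w1 b by (intro mult_right_mono[of 1 w, simplified]) auto
  finally show ?thesis unfolding e .
qed

lemma sum_split2: assumes "k \<ge> 2"
  shows "(\<Sum>j<k. (r::real) ^ Suc j) = (\<Sum>j<k-2. r ^ Suc j) + r^(k-1) + r^k"
proof -
  define n where "n = k - 2"
  have k: "k = Suc (Suc n)" using assms n_def by simp
  show ?thesis unfolding k by (simp add: add.assoc)
qed

lemma u1_bound: assumes "(q::real) > 1" "k \<ge> 4" "1/2 < 1/q" "1/q < 53/100"
  shows "1 - pi_q q (xseq k) \<ge> (1/q)^(k-1) / 2 - (phi k q - 1)"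
proof -
  define r where "r = 1/q"
  have r: "1/2 < r" "r < 53/100" using assms unfolding r_def by auto
  define w where "w = 1 / (1 - r^2)"
  define A where "A = r^(k-1)"
  define s where "s = (\<Sum>j<k-2. r ^ Suc j)"
  have px: "pi_q q (xseq k) = s + r^(k-2) * (r^2 / (1 - r^2))"
    unfolding r_def s_def by (rule pi_x[OF assms(1,2)])
  have ph: "phi k q = s + r^(k-1) + r^k"
    unfolding phi_def r_def[symmetric] s_def by (rule sum_split2) (use assms in simp)
  have e1: "r^k = A * r" unfolding A_def by (rule pow_k) (use assms in simp)
  have e2: "r^(k-2) * (r^2 / (1 - r^2)) = A * (r * w)"
    unfolding A_def w_def pow_km1[OF assms(2), of r] by (simp add: power2_eq_square)
  have e3: "r / (1 - r^2) = r * w" unfolding w_def by simp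
  have "1 - pi_q q (xseq k) = - (phi k q - 1) + A * (1 + r - r * w)"
    unfolding px ph e1 e2 A_def[symmetric] by (simp add: algebra_simps)
  moreover have "A * (1/2) \<le> A * (1 + r - r * w)"
    using scal1[OF r] r unfolding e3 A_def by (intro mult_left_mono) auto
  ultimately show ?thesis unfolding A_def r_def by simp
qed

lemma X_eq: assumes "(q::real) > 1" "r = 1/q"
  shows "pi_q q (\<lambda>_. True) - 1 = (phi k q - 1) + r^(k+1) / (1 - r)"
proof -
  define u where "u = 1 / (1 - r)"
  have r1: "1 - r \<noteq> 0" using assms by auto
  have hu1: "u * (1 - r) = 1" using r1 u_def by simp
  then have hu: "u = 1 + r*u" by (simp add: algebra_simps)
  have po: "pi_q q (\<lambda>_. True) = r * u" unfolding u_def assms(2) using pi_ones[OF assms(1)] by simp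
  have "phi k q - 1 = (phi k q - 1) * (u * (1 - r))" using hu1 by simp
  also have "\<dots> = u * ((phi k q - 1) * (1 - r))" by (simp add: algebra_simps)
  also have "\<dots> = u * (2 * r - 1 - r^(k+1))" using phi_closed[OF assms, of k] by simp
  finally have hD: "phi k q - 1 = u * (2 * r - 1 - r^(k+1))" .
  have e: "r^(k+1) / (1 - r) = r^(k+1) * u" unfolding u_def by simp
  have "u * (2 * r - 1 - r^(k+1)) + r^(k+1) * u = 2 * (r*u) - u" by (simp add: algebra_simps)
  then show ?thesis unfolding po e using hu hD by linarith
qed

lemma t1_bound: assumes "(q::real) > 1" "k \<ge> 4" "1/2 < 1/q" "1/q < 53/100"
  shows "pi_q q (yseq k) - (pi_q q (\<lambda>_. True) - 1) \<ge> (1/q)^(k-1) / 2 - (phi k q - 1)"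
proof -
  define r where "r = 1/q"
  have r: "1/2 < r" "r < 53/100" using assms unfolding r_def by auto
  define w where "w = 1 / (1 - r^2)"
  define u where "u = 1 / (1 - r)"
  define A where "A = r^(k-1)"
  have py: "pi_q q (yseq k) = A * w"
  proof -
    have "pi_q q (yseq k) = r^(k-2) * (r / (1 - r^2))" unfolding r_def by (rule pi_y[OF assms(1,2)])
    then show ?thesis unfolding A_def w_def pow_km1[OF assms(2), of r] by simp
  qed
  have e: "r^(k+1) = A * r^2"
    unfolding A_def using pow_k[of k r] assms by (simp add: power2_eq_square)
  have X: "pi_q q (\<lambda>_. True) - 1 = (phi k q - 1) + A * (r^2 * u)"
    using X_eq[OF assms(1) r_def, of k] unfolding e u_def by simp
  have s2: "w - r^2 * u \<ge> 1/2" using scal2[OF r] unfolding w_def u_def by simp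
  have "pi_q q (yseq k) - (pi_q q (\<lambda>_. True) - 1) = A * (w - r^2 * u) - (phi k q - 1)"
    unfolding py X by (simp add: algebra_simps)
  moreover have "A * (1/2) \<le> A * (w - r^2 * u)"
    using s2 r unfolding A_def by (intro mult_left_mono) auto
  ultimately show ?thesis unfolding A_def r_def by simp
qed

lemma nat_Nsplit: fixes m k :: nat shows "k \<ge> 1 \<Longrightarrow> (m+2)*k+3 = m*k + (k-1) + (k+4)" "(m+2)*k+3 = (m*k + k + 1) + (k+2)"
  by (auto simp: algebra_simps)

lemma n_rho_n: assumes "19/10 < (Q::real)" shows "real n * (1/Q)^n < 10/9"
proof -
  have "1 + real n * (Q - 1) \<le> (1 + (Q - 1))^n" by (rule Bernoulli_inequality) (use assms in simp)
  moreover have "real n * (9/10) \<le> real n * (Q - 1)" using assms by (intro mult_left_mono) auto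
  ultimately have "1 + real n * (9/10) \<le> Q^n" by simp
  then have "real n * (9/10) < Q^n" by linarith
  moreover have "Q^n > 0" using assms by simp
  ultimately show ?thesis by (simp add: power_one_over field_simps)
qed

lemma bern_ratio: assumes "0 < q" "Q - q \<ge> - E" "q \<ge> 1" "E \<ge> 0" "E \<le> 1"
  shows "(Q/q)^n \<ge> 1 - real n * E"
proof -
  have x: "Q/q - 1 \<ge> -E"
  proof -
    have "Q/q - 1 = (Q - q)/q" using assms by (simp add: field_simps)
    also have "\<dots> \<ge> -E/q" using divide_right_mono[OF assms(2), of q] assms(1) by simp
    also have "-E/q \<ge> -E"
    proof -
      have "E/q \<le> E/1" using assms by (intro divide_left_mono) auto
      then show ?thesis by simp
    qed
    finally show ?thesis by simp
  qed
  have "1 + real n * (Q/q - 1) \<le> (1 + (Q/q - 1))^n" by (rule Bernoulli_inequality) (use x assms in linarith)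
  moreover have "real n * (Q/q - 1) \<ge> real n * (-E)" using x by (intro mult_left_mono) auto
  ultimately show ?thesis by simp
qed


theorem lemma3p7:
  fixes m k :: nat and q :: real
  assumes "k \<ge> 4"
    and "\<bar>q - qk k\<bar> < 1 / qk k ^ ((m + 2) * k + 3)"
  shows "(q < qk k \<longrightarrow>
            Lm (Q_set m k q) < Lm (P_set m k 0 q)
          \<and> (\<forall>i<m. Lm (P_set m k i q) < Lm (P_set m k (Suc i) q))
          \<and> Lm (P_set m k m q) < Rm (Q_set m k q)
          \<and> Rm (Q_set m k q) < Rm (P_set m k 0 q)
          \<and> (\<forall>i<m. Rm (P_set m k i q) < Rm (P_set m k (Suc i) q)))
       \<and> (q = qk k \<longrightarrow>
            Lm (Q_set m k q) < Lm (P_set m k 0 q)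
          \<and> (\<forall>i<m. Lm (P_set m k i q) = Lm (P_set m k (Suc i) q))
          \<and> Lm (P_set m k m q) < Rm (Q_set m k q)
          \<and> Rm (Q_set m k q) < Rm (P_set m k 0 q)
          \<and> (\<forall>i<m. Rm (P_set m k i q) = Rm (P_set m k (Suc i) q)))
       \<and> (q > qk k \<longrightarrow>
            Lm (Q_set m k q) < Lm (P_set m k m q)
          \<and> (\<forall>i<m. Lm (P_set m k (Suc i) q) < Lm (P_set m k i q))
          \<and> Lm (P_set m k 0 q) < Rm (Q_set m k q)
          \<and> Rm (Q_set m k q) < Rm (P_set m k m q)
          \<and> (\<forall>i<m. Rm (P_set m k (Suc i) q) < Rm (P_set m k i q)))"
proof -
  have k4: "k \<ge> 4" by (rule assms(1))
  define Q where "Q = qk k"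
  have Qf: "19/10 < Q" "Q < 2" "phi k Q = 1" using qk_facts[OF k4] unfolding Q_def by auto
  define rh where "rh = 1/Q"
  have rh: "0 < rh" "rh < 10/19" "1/2 < rh" "rh < 1" using Qf unfolding rh_def by (auto simp: field_simps)
  have rhQ: "rh * Q = 1" using Qf unfolding rh_def by simp
  define N where "N = (m+2)*k+3"
  define E where "E = rh^N"
  have hq: "\<bar>q - Q\<bar> < E" using assms(2) unfolding E_def rh_def N_def Q_def by (simp add: power_one_over)
  have E0: "0 < E" unfolding E_def using rh by simp
  have rhk: "rh^k = 2 - Q"
  proof -
    have "(phi k Q - 1) * (1 - rh) = 2 * rh - 1 - rh^(k+1)" by (rule phi_closed) (use Qf rh_def in auto)
    then have "rh^(k+1) = 2 * rh - 1" using Qf by simp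
    then have "rh^k * rh = 2 * rh - 1" by (simp add: power_Suc2[symmetric])
    then have "rh^k * (rh * Q) = (2 * rh - 1) * Q" by (simp add: mult.assoc[symmetric])
    also have "(2 * rh - 1) * Q = 2 * (rh * Q) - Q" by (simp add: algebra_simps)
    finally show ?thesis unfolding rhQ by simp
  qed
  have E_lt: "E < rh^k" unfolding E_def N_def using rh by (intro power_strict_decreasing) auto
  have rh8: "rh^8 < 1/100"
  proof -
    have "rh^8 < (10/19)^8" using rh by (intro power_strict_mono) auto
    also have "(10/19::real)^8 < 1/100" by (simp add: power_divide)
    finally show ?thesis .
  qed
  have rh6: "rh^6 < 1/40"
  proof -
    have "rh^6 < (10/19)^6" using rh by (intro power_strict_mono) auto
    also have "(10/19::real)^6 < 1/40" by (simp add: power_divide)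
    finally show ?thesis .
  qed
  have E100: "E < 1/100"
  proof -
    have "E \<le> rh^8" unfolding E_def N_def using rh k4 by (intro power_decreasing) auto
    then show ?thesis using rh8 by linarith
  qed
  have qlt2: "q < 2" using hq E_lt rhk by linarith
  have qgt: "q > 189/100" using hq E100 Qf by linarith
  have q1: "q > 1" using qgt by simp
  have rlo: "1/2 < 1/q" using qlt2 q1 by (simp add: field_simps)
  have rhi: "1/q < 53/100" using qgt by (simp add: field_simps)
  define r where "r = 1/q"
  have r: "1/2 < r" "r < 53/100" "0 < r" "r < 1" using rlo rhi q1 unfolding r_def by auto
  have rq: "r * q = 1" unfolding r_def using q1 by simp
  define s where "s = r^k"
  define D where "D = phi k q - 1"
  define G where "G = (\<Sum>l<m. s^l)"
  have gi: "(g_qk q k ^^ i) x = 1 + D * (\<Sum>l<i. s^l) + s^i * (x - 1)" for i x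
    using g_iter[of q k i x] q1 k4 unfolding D_def s_def r_def by auto
  have gd: "(g_qk q k ^^ i) x = (g_qk q k ^^ i) 1 + s^i * (x - 1)" for i x
    using gi[of i x] gi[of i 1] by simp
  have g0: "(g_qk q k ^^ 0) 1 = 1" by simp
  have gm: "(g_qk q k ^^ m) 1 = 1 + D * G" using gi[of m 1] unfolding G_def by simp
  have gsuc: "(g_qk q k ^^ Suc i) 1 = (g_qk q k ^^ i) 1 + D * s^i" for i
    using gi[of "Suc i" 1] gi[of i 1] by (simp add: algebra_simps)
  have gless: "(g_qk q k ^^ i) x < (g_qk q k ^^ i) y \<longleftrightarrow> x < y" for i x y
    by (rule g_iter_less_iff) (use q1 k4 in auto)
  obtain t0 where t0: "t0 \<in> pi_q q ` S_set k \<inter> {0..pi_q q (wseq k)}"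
      "\<And>t. t \<in> pi_q q ` S_set k \<inter> {0..pi_q q (wseq k)} \<Longrightarrow> t \<le> t0"
    by (rule T0_max[OF q1 k4 rlo rhi]) blast
  obtain u0 where u0: "u0 \<in> pi_q q ` S_set k \<inter> {pi_q q (vseq k) .. pi_q q (\<lambda>_. True)}"
      "\<And>t. t \<in> pi_q q ` S_set k \<inter> {pi_q q (vseq k) .. pi_q q (\<lambda>_. True)} \<Longrightarrow> u0 \<le> t"
    by (rule U_min[OF q1 k4 rlo rhi]) blast
  have LP: "Lm (P_set m k i q) = (g_qk q k ^^ i) 1" if "i \<le> m" for i
    by (rule Lm_P[OF q1 k4 rlo rhi that])
  have RP: "Rm (P_set m k i q) = (g_qk q k ^^ i) 1 + s^m * t0" if "i \<le> m" for i
    unfolding s_def r_def by (rule Rm_P[OF q1 k4 rlo rhi that t0(1) t0(2)])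
  have LQ: "Lm (Q_set m k q) = (g_qk q k ^^ m) u0" by (rule Lm_Q[OF q1 k4 rlo rhi u0(1) u0(2)])
  have RQ: "Rm (Q_set m k q) = (g_qk q k ^^ m) (pi_q q (\<lambda>_. True))" by (rule Rm_Q[OF q1 k4 rlo rhi])
  have t01: "pi_q q (yseq k) \<le> t0"
    by (rule t0(2), rule IntI[OF imageI[OF yseq_S[OF k4]]], rule atLeastAtMost_iff[THEN iffD2], rule conjI,
        rule pi_nonneg[OF q1], rule piy_le_piw[OF q1 k4 rlo rhi])
  have u01: "u0 \<le> pi_q q (xseq k)"
    by (rule u0(2), rule IntI[OF imageI[OF xseq_S[OF k4]]], rule atLeastAtMost_iff[THEN iffD2], rule conjI,
        rule piv_le_pix[OF q1 k4 rlo rhi], rule pi_mono[OF q1], simp)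
  define A where "A = r^(k-1)"
  define X where "X = pi_q q (\<lambda>_. True) - 1"
  have ub: "1 - pi_q q (xseq k) \<ge> A/2 - D"
    using u1_bound[OF q1 k4 rlo rhi] unfolding A_def D_def r_def .
  have tb: "pi_q q (yseq k) - X \<ge> A/2 - D"
    using t1_bound[OF q1 k4 rlo rhi] unfolding A_def D_def r_def X_def .
  have Xe: "X = D + r^(k+1) / (1 - r)"
    using X_eq[OF q1 r_def, of k] unfolding X_def D_def .
  have X0: "X > 0"
  proof -
    have "pi_q q (\<lambda>_. True) = r / (1 - r)" unfolding r_def by (rule pi_ones[OF q1])
    moreover have "r / (1 - r) > 1" using r by (simp add: field_simps)
    ultimately show ?thesis unfolding X_def by simp
  qed
  have A0: "A > 0" unfolding A_def using r by simp
  have s0: "0 < s" "s \<le> 1" unfolding s_def using r by (auto simp: power_le_one)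
  have sm0: "0 < s^m" "s^m \<le> 1" using s0 by (auto simp: power_le_one)
  have G0: "0 \<le> G" unfolding G_def using s0 by (intro sum_nonneg) auto
  have G1: "G \<le> 11/10"
  proof -
    have s4: "s \<le> r^4" unfolding s_def using r k4 by (intro power_decreasing) auto
    have "r^4 < (53/100)^4" using r by (intro power_strict_mono) auto
    also have "(53/100::real)^4 < 1/11" by (simp add: power_divide)
    finally have s11: "s < 1/11" using s4 by linarith
    have "G * (1 - s) = 1 - s^m"
    proof -
      have "s \<noteq> 1" using s11 by auto
      then have "G = (s^m - 1) / (s - 1)" unfolding G_def by (rule geometric_sum)
      moreover have "s - 1 \<noteq> 0" using s11 by auto
      ultimately show ?thesis by (simp add: field_simps)
    qed
    then have "G * (1 - s) \<le> 1" using sm0 by simp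
    moreover have "G * (10/11) \<le> G * (1 - s)" using G0 s11 by (intro mult_left_mono) auto
    ultimately show ?thesis by linarith
  qed
  have phiq: "(phi k q - 1) * (1 - r) = 2 * r - 1 - r^(k+1)" by (rule phi_closed[OF q1 r_def])
  have phiQ: "0 = 2 * rh - 1 - rh^(k+1)"
    using phi_closed[of Q rh k] Qf rh_def by simp
  have Dkey: "D * (q - 1) * Q = 2 * (Q - q) - (r^(k+1) - rh^(k+1)) * (q * Q)"
  proof -
    have ee: "2 * (r - rh) - (r^(k+1) - rh^(k+1)) = (2 * r - 1 - r^(k+1)) - (2 * rh - 1 - rh^(k+1))"
      by (simp add: algebra_simps)
    have h: "D * (1 - r) = 2 * (r - rh) - (r^(k+1) - rh^(k+1))" unfolding ee D_def phiq phiQ[symmetric] by simp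
    have e1: "(1 - r) * q = q - 1" using rq by (simp add: algebra_simps)
    have e2: "(r - rh) * (q * Q) = Q - q"
    proof -
      have "(r - rh) * (q * Q) = (r*q) * Q - (rh * Q) * q" by (simp add: algebra_simps)
      then show ?thesis using rq rhQ by simp
    qed
    show ?thesis
    proof -
      have "D * (q - 1) * Q = D * ((1 - r) * q) * Q" using e1 by simp
      also have "\<dots> = (D * (1 - r)) * (q * Q)" by (simp add: mult_ac)
      also have "\<dots> = (2 * (r - rh) - (r^(k+1) - rh^(k+1))) * (q * Q)" unfolding h ..
      also have "\<dots> = 2 * ((r - rh) * (q * Q)) - (r^(k+1) - rh^(k+1)) * (q * Q)" by (simp add: algebra_simps)
      also have "\<dots> = 2 * (Q - q) - (r^(k+1) - rh^(k+1)) * (q * Q)" unfolding e2 ..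
      finally show ?thesis .
    qed
  qed
  have qQ: "(q - 1) * Q \<ge> 5/3"
  proof -
    have "(89/100) * (19/10) \<le> (q - 1) * Q" using qgt Qf by (intro mult_mono) auto
    then show ?thesis by simp
  qed
  have qQ0: "q * Q > 0" using q1 Qf by simp
  have Dle: "D \<le> 6/5 * E" if "q \<le> Q"
  proof -
    have "rh \<le> r" using that q1 unfolding r_def rh_def by (simp add: frac_le)
    then have "rh^(k+1) \<le> r^(k+1)" using rh by (intro power_mono) auto
    then have "0 \<le> (r^(k+1) - rh^(k+1)) * (q * Q)" using qQ0 by simp
    then have "D * ((q - 1) * Q) \<le> 2 * E" using Dkey hq that by (simp add: mult.assoc)
    show ?thesis
    proof (cases "D \<le> 0")
      case True then show ?thesis using E0 by linarith
    next
      case False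
      then have "D * (5/3) \<le> D * ((q - 1) * Q)" using qQ by (intro mult_left_mono) auto
      then show ?thesis using \<open>D * ((q - 1) * Q) \<le> 2 * E\<close> by linarith
    qed
  qed
  have Dge: "- D \<le> 6/5 * E" if "Q \<le> q"
  proof -
    have "r \<le> rh" using that Qf unfolding r_def rh_def by (simp add: frac_le)
    then have "r^(k+1) \<le> rh^(k+1)" using r by (intro power_mono) auto
    then have "(r^(k+1) - rh^(k+1)) * (q * Q) \<le> 0" using qQ0 by (simp add: mult_nonpos_nonneg)
    then have "(- D) * ((q - 1) * Q) \<le> 2 * E" using Dkey hq that by (simp add: mult.assoc)
    show ?thesis
    proof (cases "D \<ge> 0")
      case True then show ?thesis using E0 by linarith
    next
      case False
      then have "(- D) * (5/3) \<le> (- D) * ((q - 1) * Q)" using qQ by (intro mult_left_mono) auto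
      then show ?thesis using \<open>(- D) * ((q - 1) * Q) \<le> 2 * E\<close> by linarith
    qed
  qed
  have Dpos: "D > 0" if "q < Q"
    using phi_strict[of q Q k] that q1 k4 Qf unfolding D_def by auto
  have Dneg: "D < 0" if "Q < q"
    using phi_strict[of Q q k] that q1 k4 Qf unfolding D_def by auto
  have Dz: "D = 0" if "q = Q" using that Qf unfolding D_def by simp
  have px1: "1 - pi_q q (xseq k) > 0" if "D \<le> 0" using ub A0 that by linarith
  have ytX: "X < pi_q q (yseq k)" if "D \<le> 0" using tb A0 that by linarith
  have LQe: "Lm (Q_set m k q) = (g_qk q k ^^ m) 1 + s^m * (u0 - 1)" unfolding LQ by (rule gd)
  have RQe: "Rm (Q_set m k q) = (g_qk q k ^^ m) 1 + s^m * X" unfolding RQ X_def by (rule gd)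
  show ?thesis
  proof (intro conjI impI)
    assume qlt: "q < qk k"
    then have qlt': "q < Q" unfolding Q_def .
    have Dp: "D > 0" by (rule Dpos[OF qlt'])
    have DE: "D \<le> 6/5 * E" by (rule Dle) (use qlt' in simp)
    have rhr: "rh \<le> r" using qlt' q1 unfolding r_def rh_def by (simp add: frac_le)
    have key: "D * G < s^m * (A/2 - D)"
    proof (rule numA)
      show "0 < rh^(m*k)" using rh by simp
      show "rh^(m*k) \<le> 1" using rh by (simp add: power_le_one)
      show "0 < rh^(k-1)" using rh by simp
      have NN: "N = m*k + (k-1) + (k+4)" unfolding N_def using k4 by (simp add: algebra_simps)
      show "E = rh^(m*k) * rh^(k-1) * rh^(k+4)"
        unfolding E_def NN by (simp only: power_add)
      show "0 \<le> rh^(k+4)" using rh by simp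
      have "rh^(k+4) \<le> rh^8" using rh k4 by (intro power_decreasing) auto
      then show "rh^(k+4) < 1/100" using rh8 by linarith
      show "0 \<le> D" using Dp by simp
      show "D \<le> 6/5 * E" by (rule DE)
      show "0 \<le> G" by (rule G0)
      show "G \<le> 11/10" by (rule G1)
      show "rh^(m*k) \<le> s^m" unfolding s_def using rhr rh by (simp add: power_mult[symmetric] mult.commute power_mono)
      show "rh^(k-1) \<le> A" unfolding A_def using rhr rh by (intro power_mono) auto
    qed
    show "Lm (Q_set m k q) < Lm (P_set m k 0 q)"
    proof -
      have "s^m * (A/2 - D) \<le> s^m * (1 - u0)" using ub u01 sm0 by (intro mult_left_mono) auto
      then have "D * G + s^m * (u0 - 1) < 0" using key by (simp add: algebra_simps)
      then show ?thesis unfolding LQe LP[of 0, simplified] gm by simp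
    qed
    show "\<forall>i<m. Lm (P_set m k i q) < Lm (P_set m k (Suc i) q)"
    proof (intro allI impI)
      fix i assume "i < m"
      have "D * s^i > 0" using Dp s0 by simp
      then show "Lm (P_set m k i q) < Lm (P_set m k (Suc i) q)"
        using LP[of i] LP[of "Suc i"] gsuc[of i] \<open>i < m\<close> by simp
    qed
    show "Lm (P_set m k m q) < Rm (Q_set m k q)"
      unfolding LP[of m, simplified] RQ gless using X0 unfolding X_def by simp
    show "Rm (Q_set m k q) < Rm (P_set m k 0 q)"
    proof -
      have "s^m * (A/2 - D) \<le> s^m * (t0 - X)" using tb t01 sm0 by (intro mult_left_mono) auto
      then have "D * G + s^m * X < s^m * t0" using key by (simp add: algebra_simps)
      then show ?thesis unfolding RQe RP[of 0, simplified] gm by simp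
    qed
    show "\<forall>i<m. Rm (P_set m k i q) < Rm (P_set m k (Suc i) q)"
    proof (intro allI impI)
      fix i assume "i < m"
      have "D * s^i > 0" using Dp s0 by simp
      then show "Rm (P_set m k i q) < Rm (P_set m k (Suc i) q)"
        using RP[of i] RP[of "Suc i"] gsuc[of i] \<open>i < m\<close> by simp
    qed
  next
    assume qeq: "q = qk k"
    then have D0: "D = 0" using Dz unfolding Q_def by simp
    have g1: "(g_qk q k ^^ i) 1 = 1" for i using gi[of i 1] D0 by simp
    show "Lm (Q_set m k q) < Lm (P_set m k 0 q)"
    proof -
      have "u0 < 1" using u01 px1 D0 by simp
      then have "s^m * (u0 - 1) < 0" using sm0 by (simp add: mult_pos_neg)
      then show ?thesis unfolding LQe LP[of 0, simplified] g1 by simp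
    qed
    show "\<forall>i<m. Lm (P_set m k i q) = Lm (P_set m k (Suc i) q)"
    proof (intro allI impI)
      fix i assume "i < m"
      then show "Lm (P_set m k i q) = Lm (P_set m k (Suc i) q)" using LP[of i] LP[of "Suc i"] g1[of i] g1[of "Suc i"] by simp
    qed
    show "Lm (P_set m k m q) < Rm (Q_set m k q)"
      unfolding LP[of m, simplified] RQ gless using X0 unfolding X_def by simp
    show "Rm (Q_set m k q) < Rm (P_set m k 0 q)"
    proof -
      have "X < t0" using ytX t01 D0 by simp
      then have "s^m * X < s^m * t0" using sm0 by simp
      then show ?thesis unfolding RQe RP[of 0, simplified] g1 by simp
    qed
    show "\<forall>i<m. Rm (P_set m k i q) = Rm (P_set m k (Suc i) q)"
    proof (intro allI impI)
      fix i assume "i < m"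
      then show "Rm (P_set m k i q) = Rm (P_set m k (Suc i) q)" using RP[of i] RP[of "Suc i"] g1[of i] g1[of "Suc i"] by simp
    qed
  next
    assume qgt': "q > qk k"
    then have qgtQ: "Q < q" unfolding Q_def .
    have Dn: "D < 0" by (rule Dneg[OF qgtQ])
    have DE: "- D \<le> 6/5 * E" by (rule Dge) (use qgtQ in simp)
    show "Lm (Q_set m k q) < Lm (P_set m k m q)"
    proof -
      have "u0 < 1" using u01 px1 Dn by simp
      then have "s^m * (u0 - 1) < 0" using sm0 by (simp add: mult_pos_neg)
      then show ?thesis unfolding LQe LP[of m, simplified] by simp
    qed
    show "\<forall>i<m. Lm (P_set m k (Suc i) q) < Lm (P_set m k i q)"
    proof (intro allI impI)
      fix i assume "i < m"
      have "D * s^i < 0" using Dn s0 by (simp add: mult_neg_pos)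
      then show "Lm (P_set m k (Suc i) q) < Lm (P_set m k i q)"
        using LP[of i] LP[of "Suc i"] gsuc[of i] \<open>i < m\<close> by simp
    qed
    show "Lm (P_set m k 0 q) < Rm (Q_set m k q)"
    proof -
      define n where "n = m*k + k + 1"
      have NN: "N = n + (k+2)" unfolding N_def n_def by (simp add: algebra_simps)
      have En: "E = rh^n * rh^(k+2)" unfolding E_def NN by (simp only: power_add)
      have rhk2: "rh^(k+2) < 1/40"
      proof -
        have "rh^(k+2) \<le> rh^6" using rh k4 by (intro power_decreasing) auto
        then show ?thesis using rh6 by linarith
      qed
      have rhn0: "0 < rh^n" using rh by simp
      have E40: "E \<le> rh^n / 40" unfolding En using rhn0 rhk2 by (simp add: mult_left_mono)
      have Rn: "s^m * r^(k+1) \<ge> 3/4 * rh^n"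
      proof -
        have e: "s^m * r^(k+1) = r^n" unfolding s_def n_def
          by (simp add: power_mult[symmetric] power_add mult.commute)
        have rr: "r = rh * (Q/q)" unfolding r_def rh_def using Qf by simp
        have b: "(Q/q)^n \<ge> 1 - real n * E"
          by (rule bern_ratio) (use hq q1 E0 E100 in auto)
        have nE: "real n * E < 1/4"
        proof -
          have "real n * rh^n < 10/9" using n_rho_n[OF Qf(1), of n] unfolding rh_def .
          then have "real n * rh^n * rh^(k+2) \<le> 10/9 * (1/40)"
            using rhk2 rh by (intro mult_mono) auto
          then show ?thesis unfolding En by (simp add: mult.assoc)
        qed
        have "r^n = rh^n * (Q/q)^n" unfolding rr by (rule power_mult_distrib)
        moreover have "rh^n * (3/4) \<le> rh^n * (Q/q)^n" using b nE rhn0 by (intro mult_left_mono) auto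
        ultimately show ?thesis unfolding e by simp
      qed
      have SX: "s^m * X \<ge> 2 * (s^m * r^(k+1)) - (- D)"
      proof -
        have "s^m * X = s^m * D + s^m * (r^(k+1) / (1 - r))" unfolding Xe by (simp add: algebra_simps)
        moreover have "s^m * D \<ge> D" using sm0 Dn by (simp add: mult_le_cancel_right1)
        moreover have "s^m * (r^(k+1) / (1 - r)) \<ge> 2 * (s^m * r^(k+1))"
        proof -
          have h: "r^(k+1) * 2 \<le> r^(k+1) / (1 - r)" using r by (simp add: field_simps)
          have "2 * (s^m * r^(k+1)) = s^m * (r^(k+1) * 2)" by (simp only: mult_ac)
          also have "\<dots> \<le> s^m * (r^(k+1) / (1 - r))" by (rule mult_left_mono[OF h]) (use sm0 in simp)
          finally show ?thesis .
        qed
        ultimately show ?thesis by linarith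
      qed
      have "(- D) * G < s^m * X"
        by (rule numC[OF _ DE G0 G1 SX Rn E40 rhn0]) (use Dn in simp)
      then show ?thesis unfolding RQe LP[of 0, simplified] gm by (simp add: algebra_simps)
    qed
    show "Rm (Q_set m k q) < Rm (P_set m k m q)"
    proof -
      have "X < t0" using ytX t01 Dn by simp
      then have "s^m * X < s^m * t0" using sm0 by simp
      then show ?thesis unfolding RQe RP[of m, simplified] by simp
    qed
    show "\<forall>i<m. Rm (P_set m k (Suc i) q) < Rm (P_set m k i q)"
    proof (intro allI impI)
      fix i assume "i < m"
      have "D * s^i < 0" using Dn s0 by (simp add: mult_neg_pos)
      then show "Rm (P_set m k (Suc i) q) < Rm (P_set m k i q)"
        using RP[of i] RP[of "Suc i"] gsuc[of i] \<open>i < m\<close> by simp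
    qed
  qed
qed

end
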